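(* Let $f\in C^1([0,1])$ satisfy $f(0)=f(1)=0$, $f(u)>0$ for $u\in(0,1)$, $f'(0)>0$, $f(u)\leqslant f'(0)u$ for $u\in(0,1)$. For $\alpha\in\mathbb R$ and $\sigma>0$ let \[ k(x)=\frac{1}{\sqrt{2\pi\sigma}}\exp\Big(-\frac{(x-\alpha)^2}{2\sigma}\Big),\qquad r=\frac{\alpha}{\sqrt{2\sigma}}, \] and let $c_l^*,c_r^*$ be as in the context. If $f'(0)\geqslant1$, then $c_l^*<0<c_r^*$. If $f'(0)<1$, there exists a constant $r^*>0$ (depending only on $f'(0)$) such that: (i) if $r>r^*$, then $0<c_l^*<c_r^*$; (ii) if $r=r^*$, then $0=c_l^*<c_r^*$; (iii) if $-r^*<r<r^*$, then $c_l^*<0<c_r^*$; (iv) if $r=-r^*$, then $c_l^*<c_r^*=0$; (v) if $r<-r^*$, then $c_l^*<c_r^*<0$.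
   Context: $c_l^*=\sup_{\lambda<0}\{\lambda^{-1}[\int_{\mathbb R}k(x)e^{\lambda x}dx-1+f'(0)]\}$ and $c_r^*=\inf_{\lambda>0}\{\lambda^{-1}[\int_{\mathbb R}k(x)e^{\lambda x}dx-1+f'(0)]\}$ are the spreading speeds to the left and right of $u_t=\int_{\mathbb R}k(x-y)u(t,y)dy-u+f(u)$. *)

theory Defs
  imports "HOL-Analysis.Analysis"
begin

definition admissible_reaction :: "(real \<Rightarrow> real) \<Rightarrow> (real \<Rightarrow> real) \<Rightarrow> bool" where
  "admissible_reaction f f' \<longleftrightarrow>
     (\<forall>x\<in>{0..1}. (f has_real_derivative f' x) (at x within {0..1})) \<and>
     continuous_on {0..1} f' \<and>
     f 0 = 0 \<and> f 1 = 0 \<and>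
     (\<forall>u\<in>{0<..<1}. f u > 0) \<and>
     f' 0 > 0 \<and>
     (\<forall>u\<in>{0<..<1}. f u \<le> f' 0 * u)"

definition gauss_kernel :: "real \<Rightarrow> real \<Rightarrow> real \<Rightarrow> real" where
  "gauss_kernel \<alpha> \<sigma> x = 1 / sqrt (2 * pi * \<sigma>) * exp (- ((x - \<alpha>)^2) / (2 * \<sigma>))"

definition speed_fun :: "(real \<Rightarrow> real) \<Rightarrow> real \<Rightarrow> real \<Rightarrow> real" where
  "speed_fun k a l = ((\<integral>x. k x * exp (l * x) \<partial>lborel) - 1 + a) / l"

definition spreading_speed_left :: "(real \<Rightarrow> real) \<Rightarrow> real \<Rightarrow> real" where
  "spreading_speed_left k a = (SUP l\<in>{..<0}. speed_fun k a l)"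

definition spreading_speed_right :: "(real \<Rightarrow> real) \<Rightarrow> real \<Rightarrow> real" where
  "spreading_speed_right k a = (INF l\<in>{0<..}. speed_fun k a l)"

end

theory Submission imports Defs "HOL-Probability.Probability" begin

lemma mgf:
  assumes s: "\<sigma> > 0"
  shows "(\<integral>x. gauss_kernel \<alpha> \<sigma> x * exp (l * x) \<partial>lborel) = exp (\<alpha> * l + \<sigma> * l^2 / 2)"
proof -
  have "\<And>x. gauss_kernel \<alpha> \<sigma> x * exp (l * x) = exp (\<alpha> * l + \<sigma> * l^2 / 2) * normal_density (\<alpha> + \<sigma> * l) (sqrt \<sigma>) x"
  proof -
    fix x
    have e: "- ((x - \<alpha>)^2) / (2 * \<sigma>) + l * x = (\<alpha> * l + \<sigma> * l^2 / 2) + (- ((x - (\<alpha> + \<sigma> * l))^2) / (2 * (sqrt \<sigma>)^2))"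
      using s by (simp add: field_simps power2_eq_square)
    have e2: "(- ((x - (\<alpha> + \<sigma> * l))^2) / (2 * (sqrt \<sigma>)^2)) = - ((x - (\<alpha> + \<sigma> * l))^2) / (2 * \<sigma>)"
      using s by simp
    have "gauss_kernel \<alpha> \<sigma> x * exp (l * x) = 1 / sqrt (2 * pi * \<sigma>) * exp (- ((x - \<alpha>)^2) / (2 * \<sigma>) + l * x)"
      unfolding gauss_kernel_def by (simp add: exp_add[symmetric] algebra_simps)
    also have "\<dots> = 1 / sqrt (2 * pi * \<sigma>) * (exp (\<alpha> * l + \<sigma> * l^2 / 2) * exp (- ((x - (\<alpha> + \<sigma> * l))^2) / (2 * \<sigma>)))"
      by (simp only: e e2 exp_add)
    also have "\<dots> = exp (\<alpha> * l + \<sigma> * l^2 / 2) * normal_density (\<alpha> + \<sigma> * l) (sqrt \<sigma>) x"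
      unfolding normal_density_def using s by simp
    finally show "gauss_kernel \<alpha> \<sigma> x * exp (l * x) = exp (\<alpha> * l + \<sigma> * l^2 / 2) * normal_density (\<alpha> + \<sigma> * l) (sqrt \<sigma>) x" .
  qed
  then show ?thesis using s by simp
qed

lemma speed_eq:
  assumes "\<sigma> > 0"
  shows "speed_fun (gauss_kernel \<alpha> \<sigma>) a l = (exp (\<alpha> * l + \<sigma> * l^2 / 2) - 1 + a) / l"
  unfolding speed_fun_def using mgf[OF assms] by simp

lemma amgm:
  fixes a \<sigma> l :: real
  assumes "a > 0" "\<sigma> > 0" "l > 0"
  shows "a / l + \<sigma> * l / 2 \<ge> sqrt (2 * a * \<sigma>)"
proof -
  define q where "q = sqrt (2 * a * \<sigma>)"
  have q2: "q^2 = 2 * a * \<sigma>" unfolding q_def using assms by simp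
  have "0 \<le> (q - \<sigma> * l)^2" by simp
  hence "0 \<le> \<sigma> * (2 * a + \<sigma> * l^2 - 2 * q * l)" using q2 by (simp add: power2_eq_square algebra_simps)
  hence "0 \<le> 2 * a + \<sigma> * l^2 - 2 * q * l" using assms by (simp add: zero_le_mult_iff)
  hence "0 \<le> (2 * a + \<sigma> * l^2 - 2 * q * l) / (2 * l)" using assms by simp
  also have "(2 * a + \<sigma> * l^2 - 2 * q * l) / (2 * l) = a / l + \<sigma> * l / 2 - q"
    using assms by (simp add: field_simps power2_eq_square)
  finally show ?thesis unfolding q_def by simp
qed

lemma num_lb: "exp ((\<alpha>::real) * l + \<sigma> * l^2 / 2) - 1 + a \<ge> a + \<alpha> * l + \<sigma> * l^2 / 2"
  using exp_ge_add_one_self[of "\<alpha> * l + \<sigma> * l^2 / 2"] by linarith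

lemma psi_pos_lb:
  assumes "\<sigma> > 0" "a > 0" "l > 0"
  shows "speed_fun (gauss_kernel \<alpha> \<sigma>) a l \<ge> \<alpha> + sqrt (2 * a * \<sigma>)"
proof -
  have "(exp (\<alpha> * l + \<sigma> * l^2 / 2) - 1 + a) / l \<ge> (a + \<alpha> * l + \<sigma> * l^2 / 2) / l"
    using num_lb assms by (simp add: divide_right_mono)
  also have "(a + \<alpha> * l + \<sigma> * l^2 / 2) / l = \<alpha> + (a / l + \<sigma> * l / 2)"
    using assms by (simp add: field_simps power2_eq_square)
  finally show ?thesis using amgm[OF assms(2,1,3)] speed_eq[OF assms(1)] by simp
qed

lemma psi_neg_ub:
  assumes "\<sigma> > 0" "a > 0" "l < 0"
  shows "speed_fun (gauss_kernel \<alpha> \<sigma>) a l \<le> \<alpha> - sqrt (2 * a * \<sigma>)"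
proof -
  have "(exp (\<alpha> * l + \<sigma> * l^2 / 2) - 1 + a) / l \<le> (a + \<alpha> * l + \<sigma> * l^2 / 2) / l"
    using num_lb assms by (simp add: divide_right_mono_neg)
  also have "(a + \<alpha> * l + \<sigma> * l^2 / 2) / l = \<alpha> - (a / (-l) + \<sigma> * (-l) / 2)"
    using assms by (simp add: field_simps power2_eq_square)
  finally show ?thesis using amgm[OF assms(2,1), of "-l"] assms speed_eq[OF assms(1)] by simp
qed

lemma cr_lb:
  assumes "\<sigma> > 0" "a > 0"
  shows "spreading_speed_right (gauss_kernel \<alpha> \<sigma>) a \<ge> \<alpha> + sqrt (2 * a * \<sigma>)"
  unfolding spreading_speed_right_def
  by (rule cINF_greatest) (use psi_pos_lb[OF assms] in auto)

lemma cl_ub: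
  assumes "\<sigma> > 0" "a > 0"
  shows "spreading_speed_left (gauss_kernel \<alpha> \<sigma>) a \<le> \<alpha> - sqrt (2 * a * \<sigma>)"
  unfolding spreading_speed_left_def
  by (rule cSUP_least) (use psi_neg_ub[OF assms] in auto)

lemma gap:
  assumes "\<sigma> > 0" "a > 0"
  shows "spreading_speed_left (gauss_kernel \<alpha> \<sigma>) a < spreading_speed_right (gauss_kernel \<alpha> \<sigma>) a"
proof -
  have "sqrt (2 * a * \<sigma>) > 0" using assms by simp
  thus ?thesis using cr_lb[OF assms, of \<alpha>] cl_ub[OF assms, of \<alpha>] by linarith
qed

lemma bdd_cr:
  assumes "\<sigma> > 0" "a > 0"
  shows "bdd_below (speed_fun (gauss_kernel \<alpha> \<sigma>) a ` {0<..})"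
  using psi_pos_lb[OF assms] by (intro bdd_belowI2) auto

lemma g_lb: assumes "(\<sigma>::real) > 0" shows "\<alpha> * l + \<sigma> * l^2 / 2 \<ge> - (\<alpha>^2 / (2 * \<sigma>))"
proof -
  have "0 \<le> (\<sigma> * l + \<alpha>)^2 / (2 * \<sigma>)" using assms by simp
  also have "(\<sigma> * l + \<alpha>)^2 / (2 * \<sigma>) = \<alpha> * l + \<sigma> * l^2 / 2 + \<alpha>^2 / (2 * \<sigma>)"
    using assms by (simp add: field_simps power2_eq_square)
  finally show ?thesis by linarith
qed

lemma g_at: assumes "(\<sigma>::real) > 0" shows "\<alpha> * (- \<alpha> / \<sigma>) + \<sigma> * (- \<alpha> / \<sigma>)^2 / 2 = - (\<alpha>^2 / (2 * \<sigma>))"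
  using assms by (simp add: field_simps power2_eq_square)

lemma cr_pos:
  assumes s: "\<sigma> > 0" and a: "a > 0" and c: "\<alpha> \<ge> 0 \<or> exp (- (\<alpha>^2 / (2 * \<sigma>))) > 1 - a"
  shows "spreading_speed_right (gauss_kernel \<alpha> \<sigma>) a > 0"
proof (cases "\<alpha> \<ge> 0")
  case True
  have "sqrt (2 * a * \<sigma>) > 0" using s a by simp
  thus ?thesis using cr_lb[OF s a, of \<alpha>] True by linarith
next
  case False
  hence al: "\<alpha> < 0" by simp
  define \<delta> where "\<delta> = exp (- (\<alpha>^2 / (2 * \<sigma>))) - (1 - a)"
  have dp: "\<delta> > 0" using c False unfolding \<delta>_def by simp
  define m where "m = - 4 * \<alpha> / \<sigma>"
  have mp: "m > 0" unfolding m_def using al s by (simp add: divide_neg_pos)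
  define c0 where "c0 = min (\<delta> / m) (- \<alpha>)"
  have c0p: "c0 > 0" unfolding c0_def using dp mp al by simp
  have "c0 \<le> spreading_speed_right (gauss_kernel \<alpha> \<sigma>) a"
    unfolding spreading_speed_right_def
  proof (rule cINF_greatest)
    show "{0<..} \<noteq> ({}::real set)" by auto
  next
    fix l :: real assume "l \<in> {0<..}"
    hence l: "l > 0" by simp
    show "c0 \<le> speed_fun (gauss_kernel \<alpha> \<sigma>) a l"
    proof (cases "l \<le> m")
      case True
      have "exp (\<alpha> * l + \<sigma> * l^2 / 2) \<ge> exp (- (\<alpha>^2 / (2 * \<sigma>)))"
        using g_lb[OF s, of \<alpha> l] by simp
      hence "exp (\<alpha> * l + \<sigma> * l^2 / 2) - 1 + a \<ge> \<delta>" unfolding \<delta>_def by simp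
      hence "(exp (\<alpha> * l + \<sigma> * l^2 / 2) - 1 + a) / l \<ge> \<delta> / l" using l by (simp add: divide_right_mono)
      moreover have "\<delta> / l \<ge> \<delta> / m" using True l dp by (simp add: frac_le)
      ultimately show ?thesis using speed_eq[OF s] unfolding c0_def by simp
    next
      case False
      have "(exp (\<alpha> * l + \<sigma> * l^2 / 2) - 1 + a) / l \<ge> (a + \<alpha> * l + \<sigma> * l^2 / 2) / l"
        using num_lb l by (simp add: divide_right_mono)
      also have "(a + \<alpha> * l + \<sigma> * l^2 / 2) / l = \<alpha> + \<sigma> * l / 2 + a / l"
        using l by (simp add: field_simps power2_eq_square)
      finally have h: "speed_fun (gauss_kernel \<alpha> \<sigma>) a l \<ge> \<alpha> + \<sigma> * l / 2 + a / l" using speed_eq[OF s] by simp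
      have "\<sigma> * l > \<sigma> * m" using False s by simp
      also have "\<sigma> * m = - 4 * \<alpha>" unfolding m_def using s by simp
      finally have "\<alpha> + \<sigma> * l / 2 \<ge> - \<alpha>" by simp
      moreover have "a / l > 0" using a l by simp
      ultimately show ?thesis using h unfolding c0_def by linarith
    qed
  qed
  thus ?thesis using c0p by linarith
qed

lemma cr_zero:
  assumes s: "\<sigma> > 0" and a: "a > 0" and al: "\<alpha> < 0" and c: "exp (- (\<alpha>^2 / (2 * \<sigma>))) = 1 - a"
  shows "spreading_speed_right (gauss_kernel \<alpha> \<sigma>) a = 0"
  unfolding spreading_speed_right_def
proof (rule cInf_eq_minimum)
  have "- \<alpha> / \<sigma> > 0" using al s by (simp add: divide_neg_pos)
  moreover have "speed_fun (gauss_kernel \<alpha> \<sigma>) a (- \<alpha> / \<sigma>) = 0"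
    using speed_eq[OF s] g_at[OF s, of \<alpha>] c by simp
  ultimately show "0 \<in> speed_fun (gauss_kernel \<alpha> \<sigma>) a ` {0<..}"
    by (metis greaterThan_iff image_eqI)
next
  fix x assume "x \<in> speed_fun (gauss_kernel \<alpha> \<sigma>) a ` {0<..}"
  then obtain l where l: "l > 0" and x: "x = speed_fun (gauss_kernel \<alpha> \<sigma>) a l" by auto
  have "exp (\<alpha> * l + \<sigma> * l^2 / 2) \<ge> exp (- (\<alpha>^2 / (2 * \<sigma>)))"
    using g_lb[OF s, of \<alpha> l] by simp
  hence "exp (\<alpha> * l + \<sigma> * l^2 / 2) - 1 + a \<ge> 0" using c by simp
  thus "0 \<le> x" using x speed_eq[OF s] l by simp
qed

lemma cr_neg:
  assumes s: "\<sigma> > 0" and a: "a > 0" and al: "\<alpha> < 0" and c: "exp (- (\<alpha>^2 / (2 * \<sigma>))) < 1 - a"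
  shows "spreading_speed_right (gauss_kernel \<alpha> \<sigma>) a < 0"
proof -
  have p: "- \<alpha> / \<sigma> > 0" using al s by (simp add: divide_neg_pos)
  have v: "speed_fun (gauss_kernel \<alpha> \<sigma>) a (- \<alpha> / \<sigma>) < 0"
  proof -
    have "exp (\<alpha> * (- \<alpha> / \<sigma>) + \<sigma> * (- \<alpha> / \<sigma>)^2 / 2) - 1 + a < 0" using g_at[OF s, of \<alpha>] c by simp
    thus ?thesis using speed_eq[OF s] p divide_neg_pos by metis
  qed
  have "spreading_speed_right (gauss_kernel \<alpha> \<sigma>) a \<le> speed_fun (gauss_kernel \<alpha> \<sigma>) a (- \<alpha> / \<sigma>)"
    unfolding spreading_speed_right_def using p bdd_cr[OF s a] by (intro cINF_lower) auto
  thus ?thesis using v by linarith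
qed

lemma sym:
  assumes s: "\<sigma> > 0"
  shows "spreading_speed_left (gauss_kernel \<alpha> \<sigma>) a = - spreading_speed_right (gauss_kernel (- \<alpha>) \<sigma>) a"
proof -
  have img: "speed_fun (gauss_kernel \<alpha> \<sigma>) a ` {..<0} = uminus ` (speed_fun (gauss_kernel (- \<alpha>) \<sigma>) a ` {0<..})"
  proof -
    have "{..<0::real} = uminus ` {0<..}" by (auto intro: image_eqI[where x="- _"])
    hence "speed_fun (gauss_kernel \<alpha> \<sigma>) a ` {..<0} = speed_fun (gauss_kernel \<alpha> \<sigma>) a ` (uminus ` {0<..})"
      by simp
    also have "\<dots> = (\<lambda>l. speed_fun (gauss_kernel \<alpha> \<sigma>) a (- l)) ` {0<..}"
      by (simp only: image_image)
    also have "\<dots> = (\<lambda>l. - speed_fun (gauss_kernel (- \<alpha>) \<sigma>) a l) ` {0<..}"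
      by (intro image_cong refl) (simp add: speed_eq[OF s] field_simps)
    finally show ?thesis by (simp add: image_image)
  qed
  show ?thesis unfolding spreading_speed_left_def spreading_speed_right_def img
    by (simp add: Inf_real_def)
qed

theorem corollary5p1:
  shows "(\<forall>f f' \<alpha> \<sigma>. admissible_reaction f f' \<and> f' 0 \<ge> 1 \<and> \<sigma> > 0 \<longrightarrow>
            spreading_speed_left (gauss_kernel \<alpha> \<sigma>) (f' 0) < 0 \<and>
            0 < spreading_speed_right (gauss_kernel \<alpha> \<sigma>) (f' 0)) \<and>
         (\<exists>rstar :: real \<Rightarrow> real. \<forall>f f'. admissible_reaction f f' \<and> f' 0 < 1 \<longrightarrow>
            rstar (f' 0) > 0 \<and>
            (\<forall>\<alpha> \<sigma>. \<sigma> > 0 \<longrightarrow>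
              (let r = \<alpha> / sqrt (2 * \<sigma>);
                   cl = spreading_speed_left (gauss_kernel \<alpha> \<sigma>) (f' 0);
                   cr = spreading_speed_right (gauss_kernel \<alpha> \<sigma>) (f' 0)
               in (r > rstar (f' 0) \<longrightarrow> 0 < cl \<and> cl < cr) \<and>
                  (r = rstar (f' 0) \<longrightarrow> 0 = cl \<and> cl < cr) \<and>
                  (- rstar (f' 0) < r \<and> r < rstar (f' 0) \<longrightarrow> cl < 0 \<and> 0 < cr) \<and>
                  (r = - rstar (f' 0) \<longrightarrow> cl < cr \<and> cr = 0) \<and>
                  (r < - rstar (f' 0) \<longrightarrow> cl < cr \<and> cr < 0))))"
proof (intro conjI)
  show "\<forall>f f' \<alpha> \<sigma>. admissible_reaction f f' \<and> f' 0 \<ge> 1 \<and> \<sigma> > 0 \<longrightarrow>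
            spreading_speed_left (gauss_kernel \<alpha> \<sigma>) (f' 0) < 0 \<and>
            0 < spreading_speed_right (gauss_kernel \<alpha> \<sigma>) (f' 0)"
  proof (intro allI impI)
    fix f f' :: "real \<Rightarrow> real" and \<alpha> \<sigma> :: real
    assume h: "admissible_reaction f f' \<and> f' 0 \<ge> 1 \<and> \<sigma> > 0"
    hence a: "f' 0 > 0" and a1: "f' 0 \<ge> 1" and s: "\<sigma> > 0" unfolding admissible_reaction_def by auto
    have "\<And>\<beta>. exp (- (\<beta>^2 / (2 * \<sigma>))) > 1 - f' 0" using a1 by (smt (verit) exp_gt_zero)
    hence "\<And>\<beta>. spreading_speed_right (gauss_kernel \<beta> \<sigma>) (f' 0) > 0" using cr_pos[OF s a] by blast
    thus "spreading_speed_left (gauss_kernel \<alpha> \<sigma>) (f' 0) < 0 \<and>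
            0 < spreading_speed_right (gauss_kernel \<alpha> \<sigma>) (f' 0)" using sym[OF s] by simp
  qed
next
  show "\<exists>rstar :: real \<Rightarrow> real. \<forall>f f'. admissible_reaction f f' \<and> f' 0 < 1 \<longrightarrow>
            rstar (f' 0) > 0 \<and>
            (\<forall>\<alpha> \<sigma>. \<sigma> > 0 \<longrightarrow>
              (let r = \<alpha> / sqrt (2 * \<sigma>);
                   cl = spreading_speed_left (gauss_kernel \<alpha> \<sigma>) (f' 0);
                   cr = spreading_speed_right (gauss_kernel \<alpha> \<sigma>) (f' 0)
               in (r > rstar (f' 0) \<longrightarrow> 0 < cl \<and> cl < cr) \<and>
                  (r = rstar (f' 0) \<longrightarrow> 0 = cl \<and> cl < cr) \<and>
                  (- rstar (f' 0) < r \<and> r < rstar (f' 0) \<longrightarrow> cl < 0 \<and> 0 < cr) \<and>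
                  (r = - rstar (f' 0) \<longrightarrow> cl < cr \<and> cr = 0) \<and>
                  (r < - rstar (f' 0) \<longrightarrow> cl < cr \<and> cr < 0)))"
  proof (intro exI[of _ "\<lambda>a. sqrt (- ln (1 - a))"] allI impI conjI)
    fix f f' :: "real \<Rightarrow> real"
    assume h: "admissible_reaction f f' \<and> f' 0 < 1"
    define a where "a = f' 0"
    have a: "a > 0" and a1: "a < 1" using h unfolding admissible_reaction_def a_def by auto
    define R where "R = sqrt (- ln (1 - a))"
    have lnn: "ln (1 - a) < 0" using a a1 by simp
    hence Rp: "R > 0" unfolding R_def by simp
    have R2: "R^2 = - ln (1 - a)" unfolding R_def using lnn by simp
    have eR: "exp (- (R^2)) = 1 - a" using R2 a1 by simp
    show "sqrt (- ln (1 - f' 0)) > 0" using Rp unfolding R_def a_def .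
      fix \<alpha> \<sigma> :: real assume s: "\<sigma> > 0"
      define r where "r = \<alpha> / sqrt (2 * \<sigma>)"
      define cl where "cl = spreading_speed_left (gauss_kernel \<alpha> \<sigma>) a"
      define cr where "cr = spreading_speed_right (gauss_kernel \<alpha> \<sigma>) a"
      define cr' where "cr' = spreading_speed_right (gauss_kernel (- \<alpha>) \<sigma>) a"
      have clcr': "cl = - cr'" unfolding cl_def cr'_def using sym[OF s] .
      have gp: "cl < cr" unfolding cl_def cr_def using gap[OF s a] .
      have sq: "sqrt (2 * \<sigma>) > 0" using s by simp
      have r2: "r^2 = \<alpha>^2 / (2 * \<sigma>)" unfolding r_def using s by (simp add: power_divide)
      have e1: "exp (- (\<alpha>^2 / (2 * \<sigma>))) = exp (- (r^2))" using r2 by simp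
      have e2: "exp (- ((- \<alpha>)^2 / (2 * \<sigma>))) = exp (- (r^2))" using r2 by simp
      have sgn_pos: "\<alpha> > 0 \<longleftrightarrow> r > 0" unfolding r_def using sq by (simp add: zero_less_divide_iff)
      have sgn_neg: "\<alpha> < 0 \<longleftrightarrow> r < 0" unfolding r_def using sq by (simp add: divide_less_0_iff)
      have lt: "exp (- (r^2)) < 1 - a" if "\<bar>r\<bar> > R"
      proof -
        have "R^2 < r^2" using that Rp by (metis abs_of_pos abs_le_square_iff less_le not_le power2_abs)
        thus ?thesis using eR by (metis exp_less_mono neg_less_iff_less)
      qed
      have gt: "exp (- (r^2)) > 1 - a" if "\<bar>r\<bar> < R"
      proof -
        have "r^2 < R^2" using that Rp by (metis abs_of_pos abs_le_square_iff less_le not_le power2_abs)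
        thus ?thesis using eR by (metis exp_less_mono neg_less_iff_less)
      qed
      have eq: "exp (- (r^2)) = 1 - a" if "\<bar>r\<bar> = R"
        using that eR by (metis power2_abs)
      have "(r > R \<longrightarrow> 0 < cl \<and> cl < cr) \<and>
                  (r = R \<longrightarrow> 0 = cl \<and> cl < cr) \<and>
                  (- R < r \<and> r < R \<longrightarrow> cl < 0 \<and> 0 < cr) \<and>
                  (r = - R \<longrightarrow> cl < cr \<and> cr = 0) \<and>
                  (r < - R \<longrightarrow> cl < cr \<and> cr < 0)"
      proof (intro conjI impI)
        assume "r > R"
        hence "cr' < 0" unfolding cr'_def using cr_neg[OF s a, of "- \<alpha>"] lt e2 sgn_pos Rp by auto
        thus "0 < cl" using clcr' by simp
      next
        assume "r = R"
        hence "cr' = 0" unfolding cr'_def using cr_zero[OF s a, of "- \<alpha>"] eq e2 sgn_pos Rp by auto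
        thus "0 = cl" using clcr' by simp
      next
        assume "- R < r \<and> r < R"
        hence "\<bar>r\<bar> < R" by auto
        hence "cr' > 0" unfolding cr'_def using cr_pos[OF s a, of "- \<alpha>"] gt e2 by auto
        thus "cl < 0" using clcr' by simp
      next
        assume "- R < r \<and> r < R"
        hence "\<bar>r\<bar> < R" by auto
        thus "0 < cr" unfolding cr_def using cr_pos[OF s a, of "\<alpha>"] gt e1 by auto
      next
        assume "r = - R"
        thus "cr = 0" unfolding cr_def using cr_zero[OF s a, of "\<alpha>"] eq e1 sgn_neg Rp by auto
      next
        assume "r < - R"
        thus "cr < 0" unfolding cr_def using cr_neg[OF s a, of "\<alpha>"] lt e1 sgn_neg Rp by auto
      qed (use gp in auto)
      thus "let r = \<alpha> / sqrt (2 * \<sigma>);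
                   cl = spreading_speed_left (gauss_kernel \<alpha> \<sigma>) (f' 0);
                   cr = spreading_speed_right (gauss_kernel \<alpha> \<sigma>) (f' 0)
               in (r > sqrt (- ln (1 - f' 0)) \<longrightarrow> 0 < cl \<and> cl < cr) \<and>
                  (r = sqrt (- ln (1 - f' 0)) \<longrightarrow> 0 = cl \<and> cl < cr) \<and>
                  (- sqrt (- ln (1 - f' 0)) < r \<and> r < sqrt (- ln (1 - f' 0)) \<longrightarrow> cl < 0 \<and> 0 < cr) \<and>
                  (r = - sqrt (- ln (1 - f' 0)) \<longrightarrow> cl < cr \<and> cr = 0) \<and>
                  (r < - sqrt (- ln (1 - f' 0)) \<longrightarrow> cl < cr \<and> cr < 0)"
        unfolding Let_def r_def cl_def cr_def R_def a_def .
  qed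
qed

end
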